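(* Let $n\ge 2$ and consider $x(t+1)=Ax(t)+Bu(t)$, where the columns of $B\in\mathbb{R}^{n\times m}$ are canonical unit vectors, $T$ is the time horizon, and $\mathcal{W}=\sum_{t=0}^{T-1}A^tBB^{\top}(A^t)^{\top}$ is positive definite. Let $P$ and $\Theta_P$ be as in the context. (a) If $A$ is a directed line network, i.e., its only possibly nonzero entries are $a_{q+1,q}$, $q=1,\dots,n-1$, then every entry of $\Theta_P$ outside the first sub-diagonal is zero. (b) If $A$ is a directed ring network, i.e., its only possibly nonzero entries are $a_{q+1,q}$, $q=1,\dots,n-1$, and $a_{1n}$, then every entry of $\Theta_P$ outside the first sub-diagonal and the entry $(1,n)$ is zero. In both cases $\Theta_P$ has the same sparsity structure as $A$.
   Context: $P$ is one of $I$, $\mathcal{W}^{-1}$, $\mathcal{W}^{-2}$, or $vv^{\top}$ with $v$ a unit eigenvector of $\mathcal{W}$ for a simple eigenvalue. $\Theta_P=\sum_{k=1}^{m}\sum_{t=1}^{T-1}\overline{C}_k^{(t)}\overline{O}_k^{(t)}$, where, with $b_k$ the $k$-th column of $B$, $\overline{C}_k^{(t)}=\begin{pmatrix}(A^{t-1})^{\top}PA^tb_k & \cdots & A^{\top}PA^tb_k & PA^tb_k\end{pmatrix}$ and $\overline{O}_k^{(t)}=\begin{pmatrix}b_k & Ab_k&\cdots&A^{t-1}b_k\end{pmatrix}^{\top}$. Entry $(j,i)$ with $j>i$ lies in the $(j-i)$-th sub-diagonal. *)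

theory Defs
  imports "Jordan_Normal_Form.Matrix" "Jordan_Normal_Form.Char_Poly"
begin

definition gramian :: "real mat \<Rightarrow> real mat \<Rightarrow> nat \<Rightarrow> real mat" where
  "gramian A B T = mat (dim_row A) (dim_row A)
     (\<lambda>(i,j). \<Sum>t<T. (A ^\<^sub>m t * B * transpose_mat B * transpose_mat (A ^\<^sub>m t)) $$ (i,j))"

definition pos_def_mat :: "real mat \<Rightarrow> bool" where
  "pos_def_mat W \<longleftrightarrow> W \<in> carrier_mat (dim_row W) (dim_row W) \<and> transpose_mat W = W \<and>
     (\<forall>x \<in> carrier_vec (dim_row W). x \<noteq> 0\<^sub>v (dim_row W) \<longrightarrow> x \<bullet> (W *\<^sub>v x) > 0)"

definition admissible_P :: "real mat \<Rightarrow> real mat \<Rightarrow> bool" where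
  "admissible_P W P \<longleftrightarrow> (let n = dim_row W in
     P = 1\<^sub>m n
   \<or> (\<exists>Winv \<in> carrier_mat n n. Winv * W = 1\<^sub>m n \<and> W * Winv = 1\<^sub>m n \<and> P = Winv)
   \<or> (\<exists>Winv \<in> carrier_mat n n. Winv * W = 1\<^sub>m n \<and> W * Winv = 1\<^sub>m n \<and> P = Winv * Winv)
   \<or> (\<exists>v lam. eigenvector W v lam \<and> v \<bullet> v = 1 \<and> order lam (char_poly W) = 1 \<and>
         P = mat_of_cols n [v] * mat_of_rows n [v]))"

definition Cbar :: "real mat \<Rightarrow> real mat \<Rightarrow> real vec \<Rightarrow> nat \<Rightarrow> real mat" where
  "Cbar A P b t = mat_of_cols (dim_row A)
     (map (\<lambda>j. transpose_mat (A ^\<^sub>m (t - 1 - j)) *\<^sub>v (P *\<^sub>v (A ^\<^sub>m t *\<^sub>v b))) [0..<t])"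

definition Obar :: "real mat \<Rightarrow> real vec \<Rightarrow> nat \<Rightarrow> real mat" where
  "Obar A b t = mat_of_rows (dim_row A) (map (\<lambda>j. A ^\<^sub>m j *\<^sub>v b) [0..<t])"

definition Theta :: "real mat \<Rightarrow> real mat \<Rightarrow> real mat \<Rightarrow> nat \<Rightarrow> real mat" where
  "Theta A B P T = mat (dim_row A) (dim_row A)
     (\<lambda>(i,j). \<Sum>k<dim_col B. \<Sum>t\<in>{1..<T}. (Cbar A P (col B k) t * Obar A (col B k) t) $$ (i,j))"

end

theory Submission
  imports Defs
begin

definition gr :: "int \<Rightarrow> nat \<Rightarrow> int \<Rightarrow> real mat \<Rightarrow> bool" where
  "gr N n s M \<longleftrightarrow> M \<in> carrier_mat n n \<and>
     (\<forall>i<n. \<forall>j<n. M $$ (i,j) \<noteq> 0 \<longrightarrow> N dvd (int i - (int j + s)))"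

definition grv :: "int \<Rightarrow> nat \<Rightarrow> int \<Rightarrow> real vec \<Rightarrow> bool" where
  "grv N n s v \<longleftrightarrow> v \<in> carrier_vec n \<and> (\<forall>i<n. v $ i \<noteq> 0 \<longrightarrow> N dvd (int i - s))"

lemma sum_nz: assumes "sum f S \<noteq> (0::real)" obtains k where "k \<in> S" "f k \<noteq> 0"
proof -
  have "\<not> (\<forall>k\<in>S. f k = 0)"
  proof
    assume "\<forall>k\<in>S. f k = 0"
    then have "sum f S = 0" by (rule sum.neutral)
    with assms show False by simp
  qed
  then show ?thesis using that by blast
qed

lemma sum_nz_ivl: assumes "(\<Sum>k\<in>{0..<n}. f k) \<noteq> (0::real)" shows "\<exists>k<n. f k \<noteq> 0"
proof -
  obtain k where "k \<in> {0..<n}" "f k \<noteq> 0" using sum_nz[OF assms] .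
  then show ?thesis by auto
qed

lemma sum_nz_lt: assumes "(\<Sum>k<n. f k) \<noteq> (0::real)" shows "\<exists>k<n. f k \<noteq> 0"
proof -
  obtain k where "k \<in> {..<n}" "f k \<noteq> 0" using sum_nz[OF assms] .
  then show ?thesis by auto
qed

lemma gr_mult:
  assumes "gr N n s M" "gr N n r M'"
  shows "gr N n (s + r) (M * M')"
  unfolding gr_def
proof (intro conjI allI impI)
  show "M * M' \<in> carrier_mat n n" using assms unfolding gr_def by auto
  fix i j assume ij: "i < n" "j < n" "(M * M') $$ (i, j) \<noteq> 0"
  have c: "M \<in> carrier_mat n n" "M' \<in> carrier_mat n n" using assms unfolding gr_def by auto
  have "(M * M') $$ (i, j) = (\<Sum>k\<in>{0..<n}. M $$ (i,k) * M' $$ (k,j))"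
    using c ij by (simp add: index_mult_mat scalar_prod_def)
  with ij have "(\<Sum>k\<in>{0..<n}. M $$ (i,k) * M' $$ (k,j)) \<noteq> 0" by simp
  from sum_nz_ivl[OF this] obtain k where k: "k < n" "M $$ (i,k) * M' $$ (k,j) \<noteq> 0"
    by blast
  then have "N dvd (int i - (int k + s))" "N dvd (int k - (int j + r))"
    using assms ij unfolding gr_def by auto
  then have "N dvd ((int i - (int k + s)) + (int k - (int j + r)))" by (rule dvd_add)
  then show "N dvd (int i - (int j + (s + r)))" by (simp add: algebra_simps)
qed

lemma gr_mult_vec:
  assumes "gr N n s M" "grv N n r v"
  shows "grv N n (s + r) (M *\<^sub>v v)"
  unfolding grv_def
proof (intro conjI allI impI)
  show "M *\<^sub>v v \<in> carrier_vec n" using assms unfolding gr_def grv_def by auto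
  fix i assume ij: "i < n" "(M *\<^sub>v v) $ i \<noteq> 0"
  have c: "M \<in> carrier_mat n n" "v \<in> carrier_vec n" using assms unfolding gr_def grv_def by auto
  have "(M *\<^sub>v v) $ i = (\<Sum>k\<in>{0..<n}. M $$ (i,k) * v $ k)"
    using c ij by (simp add: mult_mat_vec_def scalar_prod_def)
  with ij have "(\<Sum>k\<in>{0..<n}. M $$ (i,k) * v $ k) \<noteq> 0" by simp
  from sum_nz_ivl[OF this] obtain k where k: "k < n" "M $$ (i,k) * v $ k \<noteq> 0"
    by blast
  then have "N dvd (int i - (int k + s))" "N dvd (int k - r)"
    using assms ij unfolding gr_def grv_def by auto
  then have "N dvd ((int i - (int k + s)) + (int k - r))" by (rule dvd_add)
  then show "N dvd (int i - (s + r))" by (simp add: algebra_simps)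
qed

lemma gr_one: "gr N n 0 (1\<^sub>m n)"
  unfolding gr_def by auto

lemma gr_pow: assumes "gr N n 1 A" shows "gr N n (int t) (A ^\<^sub>m t)"
proof (induction t)
  case 0
  have "dim_row A = n" using assms unfolding gr_def by auto
  then show ?case using gr_one by simp
next
  case (Suc t)
  have "gr N n (int t + 1) (A ^\<^sub>m t * A)" by (rule gr_mult[OF Suc assms])
  then show ?case by (simp add: add.commute)
qed

lemma gr_transpose: assumes "gr N n s M" shows "gr N n (- s) (transpose_mat M)"
  unfolding gr_def
proof (intro conjI allI impI)
  show "transpose_mat M \<in> carrier_mat n n" using assms unfolding gr_def by auto
  fix i j assume ij: "i < n" "j < n" "transpose_mat M $$ (i, j) \<noteq> 0"
  then have "M $$ (j,i) \<noteq> 0" using assms unfolding gr_def by auto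
  then have "N dvd (int j - (int i + s))" using assms ij unfolding gr_def by auto
  then have "N dvd - (int j - (int i + s))" by (simp only: dvd_minus_iff)
  moreover have "int i - (int j + - s) = - (int j - (int i + s))" by simp
  ultimately show "N dvd (int i - (int j + - s))" by metis
qed

lemma grv_unit: "c < n \<Longrightarrow> grv N n (int c) (unit_vec n c)"
  unfolding grv_def by auto

definition dg :: "nat \<Rightarrow> real mat \<Rightarrow> bool" where
  "dg n M \<longleftrightarrow> M \<in> carrier_mat n n \<and> (\<forall>i<n. \<forall>j<n. i \<noteq> j \<longrightarrow> M $$ (i,j) = 0)"

lemma dg_gr: assumes "dg n M" shows "gr N n 0 M"
  unfolding gr_def
proof (intro conjI allI impI)
  show "M \<in> carrier_mat n n" using assms unfolding dg_def by auto
  fix i j assume "i < n" "j < n" "M $$ (i, j) \<noteq> 0"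
  then have "i = j" using assms unfolding dg_def by auto
  then show "N dvd int i - (int j + 0)" by simp
qed

lemma dvd_small:
  assumes "N = 0 \<or> N = int n" "i < n" "j < n" "N dvd (int i - int j)"
  shows "i = j"
proof (rule ccontr)
  assume "i \<noteq> j"
  then have "int i - int j \<noteq> 0" by simp
  show False
  proof (cases "N = 0")
    case True then show False using assms(4) \<open>int i - int j \<noteq> 0\<close> by simp
  next
    case False
    from dvd_imp_le_int[OF \<open>int i - int j \<noteq> 0\<close> assms(4)] assms False show False by auto
  qed
qed

lemma gr_dg: "N = 0 \<or> N = int n \<Longrightarrow> gr N n 0 M \<Longrightarrow> dg n M"
  unfolding dg_def gr_def using dvd_small by fastforce


lemma BBt_dg:
  assumes B: "B \<in> carrier_mat n m" and Bcols: "\<forall>k<m. \<exists>i<n. col B k = unit_vec n i"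
  shows "dg n (B * transpose_mat B)"
  unfolding dg_def
proof (intro conjI allI impI)
  show "B * transpose_mat B \<in> carrier_mat n n" using B by auto
  fix i j assume ij: "i < n" "j < n" "i \<noteq> j"
  have "(B * transpose_mat B) $$ (i, j) = (\<Sum>k\<in>{0..<m}. B $$ (i,k) * B $$ (j,k))"
    using B ij by (simp add: index_mult_mat scalar_prod_def)
  also have "\<dots> = 0"
  proof (rule sum.neutral, intro ballI)
    fix k assume k: "k \<in> {0..<m}"
    then obtain c where c: "c < n" "col B k = unit_vec n c" using Bcols by auto
    have "B $$ (i,k) = unit_vec n c $ i" "B $$ (j,k) = unit_vec n c $ j"
      using c ij k B by (metis atLeastLessThan_iff carrier_matD index_col)+
    then show "B $$ (i,k) * B $$ (j,k) = 0" using ij c by auto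
  qed
  finally show "(B * transpose_mat B) $$ (i, j) = 0" .
qed

lemma gram_dg:
  assumes N: "N = 0 \<or> N = int n" and A: "A \<in> carrier_mat n n" and gA: "gr N n 1 A"
    and B: "B \<in> carrier_mat n m" and Bcols: "\<forall>k<m. \<exists>i<n. col B k = unit_vec n i"
  shows "dg n (gramian A B T)"
  unfolding dg_def
proof (intro conjI allI impI)
  show "gramian A B T \<in> carrier_mat n n" using A unfolding gramian_def by auto
  fix i j assume ij: "i < n" "j < n" "i \<noteq> j"
  have "\<And>t. (A ^\<^sub>m t * B * transpose_mat B * transpose_mat (A ^\<^sub>m t)) $$ (i,j) = 0"
  proof -
    fix t
    have eq: "A ^\<^sub>m t * B * transpose_mat B = A ^\<^sub>m t * (B * transpose_mat B)"
    proof -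
      have Ap: "A ^\<^sub>m t \<in> carrier_mat n n" using A by simp
      have Bt: "transpose_mat B \<in> carrier_mat m n" using B by simp
      show ?thesis by (rule assoc_mult_mat[OF Ap B Bt])
    qed
    have "gr N n (int t + 0 + - int t) (A ^\<^sub>m t * (B * transpose_mat B) * transpose_mat (A ^\<^sub>m t))"
      by (intro gr_mult gr_transpose gr_pow gA dg_gr BBt_dg[OF B Bcols])
    then have "dg n (A ^\<^sub>m t * (B * transpose_mat B) * transpose_mat (A ^\<^sub>m t))"
      using gr_dg[OF N] by simp
    then show "(A ^\<^sub>m t * B * transpose_mat B * transpose_mat (A ^\<^sub>m t)) $$ (i,j) = 0"
      unfolding eq dg_def using ij by auto
  qed
  then show "gramian A B T $$ (i, j) = 0" unfolding gramian_def using A ij by simp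
qed

lemma posdiag:
  assumes "pos_def_mat W" "W \<in> carrier_mat n n" "i < n"
  shows "W $$ (i,i) > 0"
proof -
  have "unit_vec n i \<noteq> 0\<^sub>v n" using assms(3)
    by (metis index_unit_vec(1) index_zero_vec(1) zero_neq_one)
  moreover have h: "\<forall>x\<in>carrier_vec n. x \<noteq> 0\<^sub>v n \<longrightarrow> 0 < x \<bullet> (W *\<^sub>v x)"
    using assms unfolding pos_def_mat_def by auto
  ultimately have "unit_vec n i \<bullet> (W *\<^sub>v unit_vec n i) > 0"
    using unit_vec_carrier by blast
  also have "unit_vec n i \<bullet> (W *\<^sub>v unit_vec n i) = W $$ (i,i)"
  proof -
    have c: "W *\<^sub>v unit_vec n i \<in> carrier_vec n" using assms by simp
    have "unit_vec n i \<bullet> (W *\<^sub>v unit_vec n i) = (W *\<^sub>v unit_vec n i) $ i"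
      using scalar_prod_left_unit[OF c assms(3)] .
    also have "\<dots> = row W i \<bullet> unit_vec n i" using assms by simp
    also have "\<dots> = row W i $ i" using assms(3) by (simp add: scalar_prod_right_unit)
    also have "\<dots> = W $$ (i,i)" using assms by simp
    finally show ?thesis .
  qed
  finally show ?thesis .
qed

lemma inv_dg:
  assumes W: "dg n W" and d: "\<forall>i<n. W $$ (i,i) \<noteq> 0" and Wi: "Winv \<in> carrier_mat n n"
    and e: "W * Winv = 1\<^sub>m n"
  shows "dg n Winv"
  unfolding dg_def
proof (intro conjI allI impI)
  show "Winv \<in> carrier_mat n n" by fact
  fix i j assume ij: "i < n" "j < n" "i \<noteq> j"
  have Wc: "W \<in> carrier_mat n n" using W unfolding dg_def by auto
  have "(W * Winv) $$ (i, j) = (\<Sum>k\<in>{0..<n}. W $$ (i,k) * Winv $$ (k,j))"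
    using Wc Wi ij by (simp add: index_mult_mat scalar_prod_def)
  also have "\<dots> = (\<Sum>k\<in>{0..<n}. if k = i then W $$ (i,i) * Winv $$ (i,j) else 0)"
    using W ij unfolding dg_def by (intro sum.cong) auto
  also have "\<dots> = W $$ (i,i) * Winv $$ (i,j)" using ij by simp
  finally have "W $$ (i,i) * Winv $$ (i,j) = 0" using e ij by simp
  then show "Winv $$ (i,j) = 0" using d ij by simp
qed

lemma eig_dg:
  assumes W: "dg n W" and ev: "eigenvector W v lam" and o: "order lam (char_poly W) = 1"
  shows "dg n (mat_of_cols n [v] * mat_of_rows n [v])"
  unfolding dg_def
proof (intro conjI allI impI)
  show "mat_of_cols n [v] * mat_of_rows n [v] \<in> carrier_mat n n" by auto
  have Wc: "W \<in> carrier_mat n n" using W unfolding dg_def by auto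
  have v: "v \<in> carrier_vec n" "W *\<^sub>v v = lam \<cdot>\<^sub>v v" using ev Wc unfolding eigenvector_def by auto
  have key: "W $$ (i,i) = lam" if i: "i < n" "v $ i \<noteq> 0" for i
  proof -
    have "(W *\<^sub>v v) $ i = (\<Sum>k\<in>{0..<n}. W $$ (i,k) * v $ k)"
      using Wc v(1) i by (simp add: mult_mat_vec_def scalar_prod_def)
    also have "\<dots> = (\<Sum>k\<in>{0..<n}. if k = i then W $$ (i,i) * v $ i else 0)"
      using W i unfolding dg_def by (intro sum.cong) auto
    also have "\<dots> = W $$ (i,i) * v $ i" using i by simp
    finally have "W $$ (i,i) * v $ i = (W *\<^sub>v v) $ i" by simp
    also have "\<dots> = lam * v $ i" using v i by simp
    finally have "W $$ (i,i) * v $ i = lam * v $ i" .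
    then show ?thesis using i by simp
  qed
  fix i j assume ij: "i < n" "j < n" "i \<noteq> j"
  have prod: "(mat_of_cols n [v] * mat_of_rows n [v]) $$ (i, j) = v $ i * v $ j"
    using ij v by (simp add: index_mult_mat scalar_prod_def mat_of_cols_index mat_of_rows_index)
  show "(mat_of_cols n [v] * mat_of_rows n [v]) $$ (i, j) = 0"
  proof (rule ccontr)
    assume "(mat_of_cols n [v] * mat_of_rows n [v]) $$ (i, j) \<noteq> 0"
    then have "v $ i \<noteq> 0" "v $ j \<noteq> 0" using prod by auto
    then have li: "W $$ (i,i) = lam" and lj: "W $$ (j,j) = lam" using key ij by auto
    have ut: "upper_triangular W" using W unfolding dg_def upper_triangular_def by auto
    define f where "f = (\<lambda>k. [:- W $$ (k,k), 1:])"
    have cp: "char_poly W = (\<Prod>k\<in>{0..<n}. f k)"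
      unfolding char_poly_upper_triangular[OF Wc ut] diag_mat_def f_def
      using Wc by (simp add: prod.distinct_set_conv_list[symmetric])
    have "(\<Prod>k\<in>{0..<n}. f k) = f i * (\<Prod>k\<in>{0..<n} - {i}. f k)"
      using ij by (simp add: prod.remove)
    also have "(\<Prod>k\<in>{0..<n} - {i}. f k) = f j * (\<Prod>k\<in>{0..<n} - {i} - {j}. f k)"
      using ij by (intro prod.remove) auto
    finally have cpe: "char_poly W = f i * (f j * (\<Prod>k\<in>{0..<n} - {i} - {j}. f k))"
      using cp by simp
    have fi: "f i = [:-lam,1:]" and fj: "f j = [:-lam,1:]" unfolding f_def using li lj by auto
    have sq: "[:-lam,1:]^2 = f i * f j" by (simp only: power2_eq_square fi fj)
    have "f i * (f j * (\<Prod>k\<in>{0..<n} - {i} - {j}. f k)) = (f i * f j) * (\<Prod>k\<in>{0..<n} - {i} - {j}. f k)"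
      by (simp only: mult.assoc)
    then have dv: "[:-lam,1:]^2 dvd char_poly W" unfolding cpe sq by (metis dvd_triv_left)
    have "char_poly W \<noteq> 0" unfolding cp f_def by (simp add: prod_zero_iff)
    with dv o show False unfolding order_divides by simp
  qed
qed


lemma P_dg:
  assumes N: "N = 0 \<or> N = int n" and A: "A \<in> carrier_mat n n" and gA: "gr N n 1 A"
    and B: "B \<in> carrier_mat n m" and Bcols: "\<forall>k<m. \<exists>i<n. col B k = unit_vec n i"
    and Wpd: "pos_def_mat (gramian A B T)" and P: "admissible_P (gramian A B T) P"
  shows "dg n P"
proof -
  let ?W = "gramian A B T"
  have dW: "dim_row ?W = n" using A unfolding gramian_def by simp
  have Wd: "dg n ?W" by (rule gram_dg[OF N A gA B Bcols])
  have Wc: "?W \<in> carrier_mat n n" using Wd unfolding dg_def by auto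
  have nz: "\<forall>i<n. ?W $$ (i,i) \<noteq> 0" using posdiag[OF Wpd Wc] by (metis less_irrefl)
  from P[unfolded admissible_P_def Let_def dW]
  consider "P = 1\<^sub>m n"
    | Wi where "Wi \<in> carrier_mat n n" "?W * Wi = 1\<^sub>m n" "P = Wi"
    | Wi where "Wi \<in> carrier_mat n n" "?W * Wi = 1\<^sub>m n" "P = Wi * Wi"
    | v lam where "eigenvector ?W v lam" "order lam (char_poly ?W) = 1"
        "P = mat_of_cols n [v] * mat_of_rows n [v]"
    by blast
  then show ?thesis
  proof cases
    case 1 then show ?thesis unfolding dg_def by auto
  next
    case (2 Wi) then show ?thesis using inv_dg[OF Wd nz] by simp
  next
    case (3 Wi)
    then have "dg n Wi" using inv_dg[OF Wd nz] by simp
    then have "gr N n (0 + 0) (Wi * Wi)" by (intro gr_mult dg_gr)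
    then show ?thesis using gr_dg[OF N] 3 by simp
  next
    case (4 v lam) then show ?thesis using eig_dg[OF Wd] by simp
  qed
qed

lemma CO_entry:
  assumes A: "A \<in> carrier_mat n n" and gA: "gr N n 1 A" and gP: "gr N n 0 P"
    and c: "c < n" and i: "i < n" and l: "l < n"
    and nz: "(Cbar A P (unit_vec n c) t * Obar A (unit_vec n c) t) $$ (i,l) \<noteq> 0"
  shows "N dvd (int i - (int l + 1))"
proof -
  let ?b = "unit_vec n c"
  define cv where "cv = (\<lambda>j. transpose_mat (A ^\<^sub>m (t - 1 - j)) *\<^sub>v (P *\<^sub>v (A ^\<^sub>m t *\<^sub>v ?b)))"
  define ov where "ov = (\<lambda>j. A ^\<^sub>m j *\<^sub>v ?b)"
  have dA: "dim_row A = n" using A by simp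
  have Cb: "Cbar A P ?b t = mat_of_cols n (map cv [0..<t])" unfolding Cbar_def cv_def dA ..
  have Ob: "Obar A ?b t = mat_of_rows n (map ov [0..<t])" unfolding Obar_def ov_def dA ..
  have "(Cbar A P ?b t * Obar A ?b t) $$ (i,l) = (\<Sum>j\<in>{0..<t}. cv j $ i * ov j $ l)"
    unfolding Cb Ob using i l
    by (simp add: index_mult_mat scalar_prod_def mat_of_cols_index mat_of_rows_index)
  with nz have "(\<Sum>j\<in>{0..<t}. cv j $ i * ov j $ l) \<noteq> 0" by simp
  from sum_nz_ivl[OF this] obtain j where j: "j < t" "cv j $ i * ov j $ l \<noteq> 0"
    by blast
  have g1: "grv N n (- int (t - 1 - j) + (0 + (int t + int c))) (cv j)"
    unfolding cv_def
    by (intro gr_mult_vec gr_transpose gr_pow gA gP grv_unit c)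
  have g2: "grv N n (int j + int c) (ov j)"
    unfolding ov_def by (intro gr_mult_vec gr_pow gA grv_unit c)
  have d1: "N dvd (int i - (- int (t - 1 - j) + (0 + (int t + int c))))"
    using g1 j i unfolding grv_def by auto
  have d2: "N dvd (int l - (int j + int c))"
    using g2 j l unfolding grv_def by auto
  have "N dvd ((int i - (- int (t - 1 - j) + (0 + (int t + int c)))) - (int l - (int j + int c)))"
    using d1 d2 by (rule dvd_diff)
  moreover have "(int i - (- int (t - 1 - j) + (0 + (int t + int c)))) - (int l - (int j + int c))
      = int i - (int l + 1)"
  proof -
    have "int (t - 1 - j) = int t - 1 - int j" using j by (simp add: of_nat_diff)
    then show ?thesis by simp
  qed
  ultimately show ?thesis by metis
qed

lemma Theta_entry:
  assumes N: "N = 0 \<or> N = int n" and A: "A \<in> carrier_mat n n" and gA: "gr N n 1 A"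
    and B: "B \<in> carrier_mat n m" and Bcols: "\<forall>k<m. \<exists>i<n. col B k = unit_vec n i"
    and Wpd: "pos_def_mat (gramian A B T)" and P: "admissible_P (gramian A B T) P"
    and i: "i < n" and l: "l < n" and nz: "Theta A B P T $$ (i,l) \<noteq> 0"
  shows "N dvd (int i - (int l + 1))"
proof -
  have gP: "gr N n 0 P" using P_dg[OF N A gA B Bcols Wpd P] by (rule dg_gr)
  have "Theta A B P T $$ (i,l) = (\<Sum>k<m. \<Sum>t\<in>{1..<T}. (Cbar A P (col B k) t * Obar A (col B k) t) $$ (i,l))"
    unfolding Theta_def using A B i l by simp
  with nz have "(\<Sum>k<m. \<Sum>t\<in>{1..<T}. (Cbar A P (col B k) t * Obar A (col B k) t) $$ (i,l)) \<noteq> 0" by simp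
  from sum_nz_lt[OF this] obtain k where k: "k < m" and
    sk: "(\<Sum>t\<in>{1..<T}. (Cbar A P (col B k) t * Obar A (col B k) t) $$ (i,l)) \<noteq> 0" by blast
  from sum_nz[OF sk] obtain t where
    ne: "(Cbar A P (col B k) t * Obar A (col B k) t) $$ (i,l) \<noteq> 0" by blast
  obtain c where c: "c < n" "col B k = unit_vec n c" using Bcols k by auto
  show ?thesis using CO_entry[OF A gA gP c(1) i l] ne c(2) by simp
qed

theorem corollary4p3:
  fixes A B P :: "real mat" and n m T :: nat
  assumes n2: "n \<ge> 2"
    and A: "A \<in> carrier_mat n n"
    and B: "B \<in> carrier_mat n m"
    and Bcols: "\<forall>k<m. \<exists>i<n. col B k = unit_vec n i"
    and Wpd: "pos_def_mat (gramian A B T)"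
    and P: "admissible_P (gramian A B T) P"
  shows
    "((\<forall>i<n. \<forall>j<n. i \<noteq> j + 1 \<longrightarrow> A $$ (i,j) = 0) \<longrightarrow>
        (\<forall>i<n. \<forall>j<n. i \<noteq> j + 1 \<longrightarrow> Theta A B P T $$ (i,j) = 0))
   \<and> ((\<forall>i<n. \<forall>j<n. i \<noteq> j + 1 \<and> \<not> (i = 0 \<and> j = n - 1) \<longrightarrow> A $$ (i,j) = 0) \<longrightarrow>
        (\<forall>i<n. \<forall>j<n. i \<noteq> j + 1 \<and> \<not> (i = 0 \<and> j = n - 1) \<longrightarrow> Theta A B P T $$ (i,j) = 0))"
proof (intro conjI impI allI)
  fix i j
  assume hA: "\<forall>i<n. \<forall>j<n. i \<noteq> j + 1 \<longrightarrow> A $$ (i,j) = 0"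
    and ij: "i < n" "j < n" "i \<noteq> j + 1"
  have gA: "gr 0 n 1 A" unfolding gr_def
  proof (intro conjI allI impI)
    show "A \<in> carrier_mat n n" by (rule A)
    fix i j assume "i < n" "j < n" "A $$ (i,j) \<noteq> 0"
    then have "i = j + 1" using hA by auto
    then show "(0::int) dvd int i - (int j + 1)" by simp
  qed
  show "Theta A B P T $$ (i,j) = 0"
  proof (rule ccontr)
    assume "Theta A B P T $$ (i,j) \<noteq> 0"
    from Theta_entry[of 0 n, OF _ A gA B Bcols Wpd P ij(1,2) this] have "int i - (int j + 1) = 0" by simp
    with ij show False by simp
  qed
next
  fix i j
  assume hA: "\<forall>i<n. \<forall>j<n. i \<noteq> j + 1 \<and> \<not> (i = 0 \<and> j = n - 1) \<longrightarrow> A $$ (i,j) = 0"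
    and ij: "i < n" "j < n" "i \<noteq> j + 1 \<and> \<not> (i = 0 \<and> j = n - 1)"
  have gA: "gr (int n) n 1 A" unfolding gr_def
  proof (intro conjI allI impI)
    show "A \<in> carrier_mat n n" by (rule A)
    fix i j assume "i < n" "j < n" "A $$ (i,j) \<noteq> 0"
    then have "i = j + 1 \<or> (i = 0 \<and> j = n - 1)" using hA by auto
    then show "int n dvd int i - (int j + 1)"
    proof
      assume "i = j + 1" then show ?thesis by simp
    next
      assume "i = 0 \<and> j = n - 1"
      then have "int i - (int j + 1) = - int n" using n2 by auto
      then show ?thesis by simp
    qed
  qed
  show "Theta A B P T $$ (i,j) = 0"
  proof (rule ccontr)
    assume "Theta A B P T $$ (i,j) \<noteq> 0"
    from Theta_entry[of "int n" n, OF _ A gA B Bcols Wpd P ij(1,2) this]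
    have d: "int n dvd int i - (int j + 1)" by simp
    have x0: "int i - (int j + 1) \<noteq> 0" using ij by auto
    from dvd_imp_le_int[OF x0 d] have "int n \<le> \<bar>int i - (int j + 1)\<bar>" by simp
    then have "i = 0 \<and> j = n - 1" using ij by auto
    with ij show False by simp
  qed
qed

end
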